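(* Let $A$ be a Malcev algebra with Jacobian ideal $J$ and $J$-nucleus $N$, with $A=N\oplus J$ and $i:A/J\to N$ the induced isomorphism. If $\overline{\mathfrak{a}}$ and $\overline{\mathfrak{b}}$ are co-prime $i$-ideals of $N$, then their product $\overline{\mathfrak{a}}\overline{\mathfrak{b}}$ is an $i$-ideal of $N$.
   Context: A Malcev algebra $A$ over a field $k$ is a nonassociative $k$-algebra with bilinear product $[\cdot,\cdot]$ satisfying $[a,a]=0$ and $[J(a,b,c),a]=J(a,b,[a,c])$ for all $a,b,c\in A$, where $J(x,y,z)=[[x,y],z]+[[y,z],x]+[[z,x],y]$. $J=J(A,A,A)$ is the span of all Jacobians; the $J$-nucleus is $N=\{x\in A: J(x,A,A)=0\}$, a Lie algebra. When $A=N\oplus J$, $i:A/J\to N$ is the induced isomorphism. A subset $X$ of $N$ is an $i$-ideal of $N$ if $i(n)X\subseteq X$ for every $n\in A/J$ (products taken in $N$). Two $i$-ideals $\overline{\mathfrak{a}},\overline{\mathfrak{b}}$ are co-prime if $\overline{\mathfrak{a}}+\overline{\mathfrak{b}}=N$. The product $\overline{\mathfrak{a}}\overline{\mathfrak{b}}$ is the span of all $[x,y]$, $x\in\overline{\mathfrak{a}}$, $y\in\overline{\mathfrak{b}}$. *)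

theory Defs
  imports Main "HOL.Vector_Spaces"
begin

definition bilinear_prod :: "('k::field \<Rightarrow> 'a::ab_group_add \<Rightarrow> 'a) \<Rightarrow> ('a \<Rightarrow> 'a \<Rightarrow> 'a) \<Rightarrow> bool" where
  "bilinear_prod scale br \<longleftrightarrow>
     (\<forall>x y z. br (x + y) z = br x z + br y z) \<and>
     (\<forall>x y z. br x (y + z) = br x y + br x z) \<and>
     (\<forall>c x y. br (scale c x) y = scale c (br x y)) \<and>
     (\<forall>c x y. br x (scale c y) = scale c (br x y))"

definition jac :: "('a \<Rightarrow> 'a \<Rightarrow> 'a::ab_group_add) \<Rightarrow> 'a \<Rightarrow> 'a \<Rightarrow> 'a \<Rightarrow> 'a" where
  "jac br x y z = br (br x y) z + br (br y z) x + br (br z x) y"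

definition malcev_algebra :: "('k::field \<Rightarrow> 'a::ab_group_add \<Rightarrow> 'a) \<Rightarrow> ('a \<Rightarrow> 'a \<Rightarrow> 'a) \<Rightarrow> bool" where
  "malcev_algebra scale br \<longleftrightarrow>
     vector_space scale \<and> bilinear_prod scale br \<and>
     (\<forall>a. br a a = 0) \<and>
     (\<forall>a b c. br (jac br a b c) a = jac br a b (br a c))"

definition jacobian_ideal :: "('k::field \<Rightarrow> 'a::ab_group_add \<Rightarrow> 'a) \<Rightarrow> ('a \<Rightarrow> 'a \<Rightarrow> 'a) \<Rightarrow> 'a set" where
  "jacobian_ideal scale br = module.span scale {jac br x y z | x y z. True}"

definition J_nucleus :: "('a \<Rightarrow> 'a \<Rightarrow> 'a::ab_group_add) \<Rightarrow> 'a set" where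
  "J_nucleus br = {x. \<forall>y z. jac br x y z = 0}"

definition direct_sum_decomp :: "('k::field \<Rightarrow> 'a::ab_group_add \<Rightarrow> 'a) \<Rightarrow> 'a set \<Rightarrow> 'a set \<Rightarrow> bool" where
  "direct_sum_decomp scale U V \<longleftrightarrow>
     module.subspace scale U \<and> module.subspace scale V \<and>
     {u + v | u v. u \<in> U \<and> v \<in> V} = UNIV \<and> U \<inter> V = {0}"

definition quot_space :: "'a::ab_group_add set \<Rightarrow> 'a set set" where
  "quot_space J = {(\<lambda>j. a + j) ` J | a. True}"

definition induced_iso :: "'a set \<Rightarrow> 'a set \<Rightarrow> 'a" where
  "induced_iso N C = (THE n. n \<in> N \<and> n \<in> C)"

definition i_ideal :: "('a \<Rightarrow> 'a \<Rightarrow> 'a::ab_group_add) \<Rightarrow> 'a set \<Rightarrow> 'a set \<Rightarrow> 'a set \<Rightarrow> bool" where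
  "i_ideal br J N X \<longleftrightarrow> X \<subseteq> N \<and>
     (\<forall>C \<in> quot_space J. \<forall>x \<in> X. br (induced_iso N C) x \<in> X)"

definition coprime_sets :: "'a::ab_group_add set \<Rightarrow> 'a set \<Rightarrow> 'a set \<Rightarrow> bool" where
  "coprime_sets N X Y \<longleftrightarrow> {x + y | x y. x \<in> X \<and> y \<in> Y} = N"

definition prod_set :: "('k::field \<Rightarrow> 'a::ab_group_add \<Rightarrow> 'a) \<Rightarrow> ('a \<Rightarrow> 'a \<Rightarrow> 'a) \<Rightarrow> 'a set \<Rightarrow> 'a set \<Rightarrow> 'a set" where
  "prod_set scale br X Y = module.span scale {br x y | x y. x \<in> X \<and> y \<in> Y}"

end

theory Submission
  imports Defs
begin

theorem lemma3p10:
  fixes scale :: "'k::field \<Rightarrow> 'a::ab_group_add \<Rightarrow> 'a"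
    and br :: "'a \<Rightarrow> 'a \<Rightarrow> 'a"
    and a b :: "'a set"
  assumes "malcev_algebra scale br"
    and "direct_sum_decomp scale (J_nucleus br) (jacobian_ideal scale br)"
    and "i_ideal br (jacobian_ideal scale br) (J_nucleus br) a"
    and "i_ideal br (jacobian_ideal scale br) (J_nucleus br) b"
    and "coprime_sets (J_nucleus br) a b"
  shows "i_ideal br (jacobian_ideal scale br) (J_nucleus br) (prod_set scale br a b)"
proof -
  define N where "N = J_nucleus br"
  define J where "J = jacobian_ideal scale br"
  have vs: "vector_space scale" and bil: "bilinear_prod scale br" and alt: "\<And>x. br x x = 0"
    using assms(1) unfolding malcev_algebra_def by auto
  interpret vector_space scale by (rule vs)
  have addL: "\<And>x y z. br (x + y) z = br x z + br y z"
   and addR: "\<And>x y z. br x (y + z) = br x y + br x z"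
   and scR: "\<And>c x y. br x (scale c y) = scale c (br x y)"
    using bil unfolding bilinear_prod_def by auto
  have zR: "\<And>x. br x 0 = 0" using addR[of _ 0 0] by simp
  have zL: "\<And>x. br 0 x = 0" using addL[of 0 0] by simp
  have negR: "\<And>x y. br x (- y) = - br x y"
    by (metis addR add.right_inverse zR add_eq_0_iff)
  have anti: "\<And>x y. br x y = - br y x"
  proof -
    fix x y
    have "0 = br (x + y) (x + y)" using alt by simp
    also have "\<dots> = br x (x + y) + br y (x + y)" by (rule addL)
    also have "\<dots> = (br x x + br x y) + (br y x + br y y)" by (simp only: addR)
    also have "\<dots> = br x y + br y x" by (simp only: alt add_0_left add_0_right)
    finally show "br x y = - br y x" by (simp add: eq_neg_iff_add_eq_0)
  qed
  have subN: "subspace N" and subJ0: "subspace J"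
    and dec: "{u + v | u v. u \<in> N \<and> v \<in> J} = UNIV" and cap: "N \<inter> J = {0}"
    using assms(2) unfolding direct_sum_decomp_def N_def J_def by auto
  have aN: "a \<subseteq> N" and bN: "b \<subseteq> N"
    using assms(3,4) unfolding i_ideal_def N_def by auto
  have ia: "\<And>C x. C \<in> quot_space J \<Longrightarrow> x \<in> a \<Longrightarrow> br (induced_iso N C) x \<in> a"
    using assms(3) unfolding i_ideal_def N_def J_def by auto
  have ib: "\<And>C x. C \<in> quot_space J \<Longrightarrow> x \<in> b \<Longrightarrow> br (induced_iso N C) x \<in> b"
    using assms(4) unfolding i_ideal_def N_def J_def by auto
  have isoN: "induced_iso N C \<in> N" if CQ: "C \<in> quot_space J" for C
  proof -
    obtain c where C: "C = (\<lambda>j. c + j) ` J" using CQ unfolding quot_space_def by blast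
    have "c \<in> {u + v | u v. u \<in> N \<and> v \<in> J}" using dec by simp
    then obtain u v where uv: "c = u + v" "u \<in> N" "v \<in> J" by auto
    have uC: "u \<in> C" unfolding C using uv subspace_neg[OF subJ0 uv(3)]
      by (auto intro!: image_eqI[where x="- v"])
    have uniq: "n = u" if nh: "n \<in> N" "n \<in> C" for n
    proof -
      obtain j where j: "j \<in> J" "n = c + j" using nh(2) C by auto
      have "n - u = j + v" using j uv by (simp add: algebra_simps)
      hence "n - u \<in> J" using subspace_add[OF subJ0 j(1) uv(3)] by simp
      moreover have "n - u \<in> N" using subspace_diff[OF subN nh(1) uv(2)] .
      ultimately have "n - u = 0" using cap by blast
      thus ?thesis by simp
    qed
    have "induced_iso N C = u" unfolding induced_iso_def
      by (rule the_equality) (use uC uv(2) uniq in blast)+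
    thus ?thesis using uv(2) by simp
  qed
  have allN: "\<exists>C \<in> quot_space J. induced_iso N C = n" if "n \<in> N" for n
  proof -
    have "(\<lambda>j. n + j) ` J \<in> quot_space J" unfolding quot_space_def by auto
    moreover have "induced_iso N ((\<lambda>j. n + j) ` J) = n"
    proof -
      have hn: "n \<in> (\<lambda>j. n + j) ` J" using subspace_0[OF subJ0] by (intro image_eqI[where x=0]) simp_all
      have uq: "m = n" if mh: "m \<in> N" "m \<in> (\<lambda>j. n + j) ` J" for m
      proof -
        obtain j where j: "j \<in> J" "m = n + j" using mh(2) by auto
        have "j = m - n" using j by simp
        hence "j \<in> N" using subspace_diff[OF subN mh(1) \<open>n \<in> N\<close>] by simp
        hence "j = 0" using cap j(1) by blast
        thus ?thesis using j(2) by simp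
      qed
      show ?thesis unfolding induced_iso_def by (rule the_equality) (use hn uq that in blast)+
    qed
    ultimately show ?thesis by blast
  qed
  have ia': "\<And>n x. n \<in> N \<Longrightarrow> x \<in> a \<Longrightarrow> br n x \<in> a" using allN ia by blast
  have ib': "\<And>n x. n \<in> N \<Longrightarrow> x \<in> b \<Longrightarrow> br n x \<in> b" using allN ib by blast
  define S where "S = {br x y | x y. x \<in> a \<and> y \<in> b}"
  have SN: "S \<subseteq> N"
  proof
    fix z assume "z \<in> S"
    then obtain x y where xy: "z = br x y" "x \<in> a" "y \<in> b" unfolding S_def by auto
    have "br x y \<in> b" using ib' aN xy by auto
    thus "z \<in> N" using xy bN by auto
  qed
  have spanN: "span S \<subseteq> N" using span_minimal[OF SN subN] .
  have inv: "br n z \<in> span S" if n: "n \<in> N" and z: "z \<in> span S" for n z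
  proof -
    have "S \<subseteq> {z. br n z \<in> span S}"
    proof
      fix w assume "w \<in> S"
      then obtain x y where xy: "w = br x y" "x \<in> a" "y \<in> b" unfolding S_def by auto
      have jz: "jac br n x y = 0" using n unfolding N_def J_nucleus_def by auto
      have "br n (br x y) = - br (br x y) n" using anti by blast
      also have "\<dots> = br (br n x) y + br (br y n) x"
      proof -
        have "br (br n x) y + (br (br x y) n + br (br y n) x) = 0"
          using jz unfolding jac_def by (simp add: add.assoc)
        thus ?thesis by (metis add.left_commute add_eq_0_iff neg_eq_iff_add_eq_0)
      qed
      also have "br (br y n) x = br x (br n y)"
      proof -
        have e1: "br y n = - br n y" by (rule anti)
        have "br (br y n) x = - br x (br y n)" by (rule anti)
        also have "\<dots> = - br x (- br n y)" by (simp only: e1)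
        also have "\<dots> = br x (br n y)" by (simp add: negR)
        finally show ?thesis .
      qed
      finally have eq: "br n (br x y) = br (br n x) y + br x (br n y)" .
      have "br (br n x) y \<in> S" unfolding S_def using ia' n xy by blast
      moreover have "br x (br n y) \<in> S" unfolding S_def using ib' n xy by blast
      ultimately have "br n (br x y) \<in> span S"
        using eq span_add span_superset by (metis subsetD)
      thus "w \<in> {z. br n z \<in> span S}" using xy by simp
    qed
    moreover have "subspace {z. br n z \<in> span S}"
      by (rule subspaceI) (auto simp: zR addR scR intro: span_zero span_add span_scale)
    ultimately show ?thesis using span_minimal z by blast
  qed
  show ?thesis unfolding i_ideal_def prod_set_def
    using spanN inv isoN unfolding S_def N_def J_def by blast
qed

end
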